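(* Let $X\in\mathbb{R}^{m\times n}_+$, $W\in\mathbb{R}^{m\times r}$ and $H\in\mathbb{R}^{r\times n}_+$ be such that $X=WH$ satisfies the facet-based conditions (FBC) for some integer $s$. Then every facet of $\operatorname{conv}(W)$ is a facet of $\operatorname{conv}(X)$.
   Context: For a matrix $M$, $\operatorname{conv}(M)$ denotes the convex hull of its columns. A facet of a polytope is a face of dimension one less than the dimension of the polytope. The unit simplex is $\Delta^r=\{x\in\mathbb{R}^r: x\ge 0,\ \sum_i x_i=1\}$. Facet-based conditions (FBC) with parameter $s$ for $X=WH$, where $d=\operatorname{rank}(X)$: (a) no column of $W$ lies in the convex hull of the other columns of $W$ (so $\operatorname{conv}(W)$ is a polytope whose $r$ vertices are the columns of $W$); (b) $H(:,j)\in\Delta^r$ for all $j=1,\dots,n$; (c) each facet of $\operatorname{conv}(W)$ contains at least $s\ge d$ distinct columns of $X$, and among them at least $d-1$ generate that facet (i.e., the convex hull of these $s$ columns has dimension $d-2$); (d) every facet of $\operatorname{conv}(X)$ which is not a facet of $\operatorname{conv}(W)$ contains strictly fewer than $s$ distinct columns of $X$. *)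

theory Defs
  imports "HOL-Analysis.Analysis"
begin

definition conv_cols :: "real^'c^'m \<Rightarrow> (real^'m) set" where
  "conv_cols M = convex hull (columns M)"

definition FBC :: "real^'n^'m \<Rightarrow> real^'r^'m \<Rightarrow> real^'n^'r \<Rightarrow> nat \<Rightarrow> bool" where
  "FBC X W H s \<longleftrightarrow>
     X = W ** H \<and>
     s \<ge> rank X \<and>
     \<comment> \<open>(a)\<close>
     (\<forall>k. column k W \<notin> convex hull ((\<lambda>i. column i W) ` (UNIV - {k}))) \<and>
     \<comment> \<open>(b)\<close>
     (\<forall>j. (\<forall>i. H $ i $ j \<ge> 0) \<and> (\<Sum>i\<in>UNIV. H $ i $ j) = 1) \<and>
     \<comment> \<open>(c)\<close>
     (\<forall>F. F facet_of conv_cols W \<longrightarrow>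
        (\<exists>S. S \<subseteq> F \<inter> columns X \<and> card S \<ge> s \<and>
             aff_dim (convex hull S) = int (rank X) - 2)) \<and>
     \<comment> \<open>(d)\<close>
     (\<forall>G. G facet_of conv_cols X \<and> \<not> G facet_of conv_cols W \<longrightarrow>
        card (G \<inter> columns X) < s)"

end

theory Submission
  imports Defs
begin

lemma facets_nested_eq:
  fixes Q :: "'a::euclidean_space set"
  assumes "C1 facet_of Q" "C2 facet_of Q" "C1 \<subseteq> C2"
  shows "C1 = C2"
proof (rule ccontr)
  assume ne: "C1 \<noteq> C2"
  have f1: "C1 face_of Q" and f2: "C2 face_of Q" using assms facet_of_def by auto
  have "C1 face_of C2" using face_of_subset[OF f1 assms(3) face_of_imp_subset[OF f2]] .
  then have "aff_dim C1 < aff_dim C2"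
    using face_of_aff_dim_lt[OF face_of_imp_convex[OF f2] _ ne] by blast
  then show False using assms unfolding facet_of_def by simp
qed

lemma face_of_Int_sub:
  fixes Q :: "'a::euclidean_space set"
  assumes "F face_of Q" "P \<subseteq> Q" "convex P"
  shows "(F \<inter> P) face_of P"
  using assms unfolding face_of_def
  by (auto simp: convex_Int) (meson in_mono)+

lemma affine_hull_facet:
  fixes S :: "'a::euclidean_space set"
  assumes "C facet_of S" "C = S \<inter> {x. a \<bullet> x = b}" "S \<subseteq> {x. a \<bullet> x \<le> b}"
  shows "affine hull S \<inter> {x. a \<bullet> x = b} = affine hull C"
proof -
  have "C \<noteq> S" using assms(1) unfolding facet_of_def by auto
  then obtain p where p: "p \<in> S" "a \<bullet> p < b" using assms(2,3) by fastforce
  define T where "T = affine hull S \<inter> {x. a \<bullet> x = b}"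
  have affT: "affine T" unfolding T_def by (simp add: affine_Int affine_hyperplane)
  have CT: "affine hull C \<subseteq> T"
    by (rule hull_minimal) (use assms(2) affT hull_inc[of _ S affine] in \<open>auto simp: T_def\<close>)
  have "T \<subset> affine hull S" using p hull_subset[of S affine] unfolding T_def by auto
  then have "aff_dim T < aff_dim S"
    using aff_dim_psubset[of T S] affT by (metis hull_same)
  moreover have "aff_dim (affine hull C) = aff_dim S - 1" using assms(1) facet_of_def by auto
  moreover have "affine hull C \<noteq> {}" using assms(1) facet_of_def by auto
  moreover have "aff_dim (affine hull C) \<le> aff_dim T" using CT aff_dim_subset by blast
  ultimately show ?thesis
    using affine_dim_equal[of "affine hull C" T] CT affT unfolding T_def by force
qed

lemma halfspace_transfer:
  fixes P Q :: "'a::euclidean_space set"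
  assumes polyQ: "polyhedron Q" and PQ: "P \<subseteq> Q" and aff: "affine hull P = affine hull Q"
    and CP: "C facet_of P" and CQ: "C facet_of Q"
    and Ceq: "C = P \<inter> {x. a \<bullet> x = b}" and Ph: "P \<subseteq> {x. a \<bullet> x \<le> b}"
  shows "Q \<subseteq> {x. a \<bullet> x \<le> b}"
proof
  fix q assume qQ: "q \<in> Q"
  obtain a' b' where Qh: "Q \<subseteq> {x. a' \<bullet> x \<le> b'}" and Ceq': "C = Q \<inter> {x. a' \<bullet> x = b'}"
    using facet_of_polyhedron[OF polyQ CQ] by metis
  have Z1: "affine hull P \<inter> {x. a \<bullet> x = b} = affine hull C"
    using affine_hull_facet[OF CP Ceq Ph] .
  have Z2: "affine hull Q \<inter> {x. a' \<bullet> x = b'} = affine hull C"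
    using affine_hull_facet[OF CQ Ceq' Qh] .
  have "C \<noteq> P" using CP unfolding facet_of_def by auto
  then obtain p where p: "p \<in> P" "a \<bullet> p < b" using Ceq Ph by fastforce
  have pQ: "p \<in> Q" using p PQ by auto
  have ap': "a' \<bullet> p < b'"
  proof -
    have "a' \<bullet> p \<le> b'" using Qh pQ by auto
    moreover have "a' \<bullet> p \<noteq> b'" using Ceq' Ceq pQ p by auto
    ultimately show ?thesis by simp
  qed
  have aq': "a' \<bullet> q \<le> b'" using Qh qQ by auto
  show "q \<in> {x. a \<bullet> x \<le> b}"
  proof (rule ccontr)
    assume "q \<notin> {x. a \<bullet> x \<le> b}"
    then have aq: "a \<bullet> q > b" by simp
    define \<mu> where "\<mu> = (a \<bullet> q - b) / (a \<bullet> q - a \<bullet> p)"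
    have mu0: "0 < \<mu>" and mu1: "\<mu> < 1" using aq p(2) unfolding \<mu>_def by (auto simp: field_simps)
    define z where "z = \<mu> *\<^sub>R p + (1 - \<mu>) *\<^sub>R q"
    have zQ: "z \<in> Q"
      unfolding z_def using convexD[OF polyhedron_imp_convex[OF polyQ] pQ qQ, of \<mu> "1 - \<mu>"] mu0 mu1 by simp
    have "a \<bullet> z = \<mu> * (a \<bullet> p) + (1 - \<mu>) * (a \<bullet> q)" unfolding z_def by (simp add: inner_add_right)
    also have "\<dots> = b"
    proof -
      have ne: "a \<bullet> q - a \<bullet> p \<noteq> 0" using aq p(2) by simp
      show ?thesis using ne unfolding \<mu>_def by (simp add: divide_simps) (simp add: algebra_simps)
    qed
    finally have az: "a \<bullet> z = b" .
    have "z \<in> affine hull P" using zQ aff hull_inc[of z Q affine] by simp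
    then have "z \<in> affine hull C" using Z1 az by auto
    then have "a' \<bullet> z = b'" using Z2 by auto
    moreover have "a' \<bullet> z = \<mu> * (a' \<bullet> p) + (1 - \<mu>) * (a' \<bullet> q)" unfolding z_def by (simp add: inner_add_right)
    moreover have "\<mu> * (a' \<bullet> p) + (1 - \<mu>) * (a' \<bullet> q) < b'"
    proof -
      have "\<mu> * (a' \<bullet> p) < \<mu> * b'" using mu0 ap' by simp
      moreover have "(1 - \<mu>) * (a' \<bullet> q) \<le> (1 - \<mu>) * b'" using mu1 aq' by (simp add: mult_left_mono)
      ultimately show ?thesis by (simp add: algebra_simps)
    qed
    ultimately show False by simp
  qed
qed

lemma local_facet:
  fixes P Q F :: "'a::euclidean_space set"
  assumes polyP: "polyhedron P" and polyQ: "polyhedron Q" and PQ: "P \<subseteq> Q"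
    and FQ: "F facet_of Q" and Gne: "F \<inter> P \<noteq> {}" and GP: "F \<inter> P \<noteq> P"
    and good: "\<And>C. C facet_of P \<Longrightarrow> F \<inter> P \<subseteq> C \<Longrightarrow> C facet_of Q"
  shows "(F \<inter> P) facet_of P"
proof -
  define G where "G = F \<inter> P"
  have cvxP: "convex P" using polyP polyhedron_imp_convex by blast
  have Gface: "G face_of P" unfolding G_def
    using face_of_Int_sub[OF _ PQ cvxP] FQ facet_of_def by blast
  obtain C0 where C0: "C0 facet_of P" "G \<subseteq> C0"
    using face_of_polyhedron_subset_facet[OF polyP Gface] Gne GP unfolding G_def by blast
  have C0Q: "C0 facet_of Q" using good C0 unfolding G_def by blast
  have affdim: "aff_dim P = aff_dim Q" using C0 C0Q unfolding facet_of_def by simp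
  have aff: "affine hull P = affine hull Q" using aff_dim_eq_full_gen[OF PQ] affdim by simp
  obtain Fam where finF: "finite Fam" and seq: "P = affine hull P \<inter> \<Inter>Fam"
    and faces: "\<And>h. h \<in> Fam \<Longrightarrow> \<exists>a b. a \<noteq> 0 \<and> h = {x. a \<bullet> x \<le> b}"
    and min: "\<And>F'. F' \<subset> Fam \<Longrightarrow> P \<subset> (affine hull P) \<inter> \<Inter>F'"
    using polyP by (simp add: polyhedron_Int_affine_minimal) meson
  then obtain a b where ab: "\<And>h. h \<in> Fam \<Longrightarrow> a h \<noteq> 0 \<and> h = {x. a h \<bullet> x \<le> b h}"
    by metis
  note expl = facet_of_polyhedron_explicit[OF finF seq ab min]
  have cvxG: "convex G" using Gface face_of_imp_convex by blast
  have "G \<noteq> {}" using Gne unfolding G_def .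
  then obtain g where gG: "g \<in> rel_interior G" using rel_interior_eq_empty cvxG by blast
  then have gG': "g \<in> G" using rel_interior_subset by blast
  have gP: "g \<in> P" using gG' unfolding G_def by auto
  define U where "U = \<Inter> ((\<lambda>h. {x. a h \<bullet> x < b h}) ` {h\<in>Fam. a h \<bullet> g \<noteq> b h})"
  have openU: "open U" unfolding U_def
    by (rule open_INT) (use finF open_halfspace_lt in auto)
  have gle: "\<And>h. h \<in> Fam \<Longrightarrow> a h \<bullet> g \<le> b h"
  proof -
    fix h assume "h \<in> Fam"
    then have "g \<in> h" using gP seq by blast
    then show "a h \<bullet> g \<le> b h" using ab \<open>h \<in> Fam\<close> by blast
  qed
  have gU: "g \<in> U" unfolding U_def using gle by (force simp: order_less_le)
  have tight: "Q \<subseteq> h" if hF: "h \<in> Fam" and ht: "a h \<bullet> g = b h" for h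
  proof -
    define Ch where "Ch = P \<inter> {x. a h \<bullet> x = b h}"
    have ChP: "Ch facet_of P" using expl hF unfolding Ch_def by blast
    have "g \<in> Ch" using gP ht unfolding Ch_def by simp
    then have "G \<subseteq> Ch"
      using subset_of_face_of[OF facet_of_imp_face_of[OF ChP], of G] gG Gface face_of_imp_subset by blast
    then have ChQ: "Ch facet_of Q" using good ChP unfolding G_def by blast
    have Ph: "P \<subseteq> {x. a h \<bullet> x \<le> b h}" using seq hF ab by blast
    have "Q \<subseteq> {x. a h \<bullet> x \<le> b h}"
      using halfspace_transfer[OF polyQ PQ aff ChP ChQ Ch_def Ph] .
    then show ?thesis using ab hF by blast
  qed
  have QU: "Q \<inter> U \<subseteq> P"
  proof
    fix x assume xQU: "x \<in> Q \<inter> U"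
    have "x \<in> affine hull P" using aff xQU hull_inc[of x Q affine] by auto
    moreover have "x \<in> \<Inter>Fam"
    proof
      fix h assume hF: "h \<in> Fam"
      show "x \<in> h"
      proof (cases "a h \<bullet> g = b h")
        case True then show ?thesis using tight hF xQU by blast
      next
        case False
        then have "a h \<bullet> x < b h" using xQU hF unfolding U_def by blast
        then have "x \<in> {x. a h \<bullet> x \<le> b h}" by simp
        moreover have "h = {x. a h \<bullet> x \<le> b h}" using ab hF by blast
        ultimately show ?thesis by simp
      qed
    qed
    ultimately show "x \<in> P" using seq by blast
  qed
  have FU: "F \<inter> U \<subseteq> G" using QU FQ facet_of_imp_subset unfolding G_def by blast
  have cvxF: "convex F" using FQ facet_of_imp_face_of face_of_imp_convex by blast
  have "aff_dim (F \<inter> U) = aff_dim F"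
    using aff_dim_convex_Int_open[OF cvxF openU] gU gG' unfolding G_def by blast
  then have "aff_dim F \<le> aff_dim G" using FU aff_dim_subset by metis
  moreover have "aff_dim F = aff_dim P - 1" using FQ affdim unfolding facet_of_def by simp
  moreover have "aff_dim G < aff_dim P"
    using face_of_aff_dim_lt[OF cvxP Gface] GP unfolding G_def by blast
  ultimately have "aff_dim G = aff_dim P - 1" by simp
  then show ?thesis using Gface Gne unfolding facet_of_def G_def by simp
qed

lemma abstract_main:
  fixes P Q F :: "'a::euclidean_space set"
  assumes polyP: "polytope P" and polyQ: "polytope Q" and PQ: "P \<subseteq> Q"
    and FQ: "F facet_of Q"
    and K: "\<And>F'. F' facet_of Q \<Longrightarrow> \<exists>S. S \<noteq> {} \<and> S \<subseteq> F' \<inter> P \<and>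
              (\<forall>C. C facet_of P \<and> S \<subseteq> C \<longrightarrow> C facet_of Q)"
  shows "F facet_of P"
proof -
  have hP: "polyhedron P" and hQ: "polyhedron Q" using polyP polyQ polytope_imp_polyhedron by auto
  have cvxP: "convex P" using polyP polytope_imp_convex by blast
  have cvxQ: "convex Q" using polyQ polytope_imp_convex by blast
  have cpQ: "compact Q" using polyQ polytope_imp_compact by blast
  obtain S where S: "S \<noteq> {}" "S \<subseteq> F \<inter> P" "\<And>C. C facet_of P \<Longrightarrow> S \<subseteq> C \<Longrightarrow> C facet_of Q"
    using K[OF FQ] by blast
  show ?thesis
  proof (cases "F \<inter> P = P")
    case False
    have Gne: "F \<inter> P \<noteq> {}" using S by blast
    have GfP: "(F \<inter> P) facet_of P"
      by (rule local_facet[OF hP hQ PQ FQ Gne False]) (use S in blast)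
    then have GfQ: "(F \<inter> P) facet_of Q" using S by blast
    have "F \<inter> P = F" using facets_nested_eq[OF GfQ FQ] by blast
    then show ?thesis using GfP by simp
  next
    case True
    then have PF: "P \<subseteq> F" by blast
    have allF: "P \<subseteq> F'" if F'Q: "F' facet_of Q" for F'
    proof (rule ccontr)
      assume nsub: "\<not> P \<subseteq> F'"
      obtain S' where S': "S' \<noteq> {}" "S' \<subseteq> F' \<inter> P" "\<And>C. C facet_of P \<Longrightarrow> S' \<subseteq> C \<Longrightarrow> C facet_of Q"
        using K[OF F'Q] by metis
      have G'face: "(F' \<inter> P) face_of P"
        using face_of_Int_sub[OF _ PQ cvxP] F'Q facet_of_def by blast
      obtain C where C: "C facet_of P" "F' \<inter> P \<subseteq> C"
        using face_of_polyhedron_subset_facet[OF hP G'face] S' nsub by blast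
      have "S' \<subseteq> C" using S'(2) C(2) by blast
      then have CQ: "C facet_of Q" using S'(3) C(1) by blast
      have CP: "C \<subseteq> P" using C facet_of_imp_subset by blast
      have "C = F" using facets_nested_eq[OF CQ FQ] CP PF by blast
      then have "C = P" using CP PF by blast
      then show False using C(1) unfolding facet_of_def by simp
    qed
    obtain p where pP: "p \<in> P" using S by blast
    have pQ: "p \<in> Q" using pP PQ by blast
    obtain v where v: "v extreme_point_of Q" "v \<noteq> p"
    proof (rule ccontr)
      assume "\<not> thesis"
      with that have "{x. x extreme_point_of Q} \<subseteq> {p}" by blast
      then have "convex hull {x. x extreme_point_of Q} \<subseteq> convex hull {p}" by (rule hull_mono)
      then have "Q \<subseteq> {p}" using Krein_Milman_Minkowski[OF cpQ cvxQ] by simp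
      then have "Q = {p}" using pQ by blast
      moreover have "F \<subseteq> Q" using FQ facet_of_imp_subset by blast
      moreover have "F \<noteq> {}" using FQ facet_of_def by blast
      ultimately have "F = Q" by blast
      then show False using FQ unfolding facet_of_def by simp
    qed
    have vface: "{v} face_of Q" using v face_of_singleton by blast
    have "{v} \<noteq> Q" using v pQ by blast
    then have "{v} = \<Inter>{F'. F' facet_of Q \<and> {v} \<subseteq> F'}"
      using face_of_polyhedron[OF hQ vface] by blast
    moreover have "p \<in> \<Inter>{F'. F' facet_of Q \<and> {v} \<subseteq> F'}" using allF pP by blast
    ultimately have "p = v" by (metis singletonD)
    then show ?thesis using v by blast
  qed
qed

lemma column_mult_eq:
  fixes W :: "real^'r^'m" and H :: "real^'n^'r"
  shows "column j (W ** H) = (\<Sum>i\<in>UNIV. H $ i $ j *\<^sub>R column i W)"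
  by (simp add: vec_eq_iff matrix_matrix_mult_def column_def sum_component mult.commute)

lemma finite_columns: "finite (columns (M::real^'c^'m))"
proof -
  have "columns M = range (\<lambda>i. column i M)" unfolding columns_def by auto
  then show ?thesis by simp
qed

theorem lemma1:
  fixes X :: "real^'n^'m" and W :: "real^'r^'m" and H :: "real^'n^'r" and s :: nat
  assumes "\<forall>i j. X $ i $ j \<ge> 0"
    and "\<forall>i j. H $ i $ j \<ge> 0"
    and "FBC X W H s"
  shows "\<forall>F. F facet_of conv_cols W \<longrightarrow> F facet_of conv_cols X"
proof (intro allI impI)
  fix F assume FQ: "F facet_of conv_cols W"
  have XWH: "X = W ** H" and srank: "s \<ge> rank X"
    and stoch: "\<forall>j. (\<forall>i. H $ i $ j \<ge> 0) \<and> (\<Sum>i\<in>UNIV. H $ i $ j) = 1"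
    and condc: "\<forall>F. F facet_of conv_cols W \<longrightarrow>
        (\<exists>S. S \<subseteq> F \<inter> columns X \<and> card S \<ge> s \<and>
             aff_dim (convex hull S) = int (rank X) - 2)"
    and condd: "\<forall>G. G facet_of conv_cols X \<and> \<not> G facet_of conv_cols W \<longrightarrow>
        card (G \<inter> columns X) < s"
    using assms(3) unfolding FBC_def by blast+
  have colsXP: "columns X \<subseteq> conv_cols X" unfolding conv_cols_def by (rule hull_subset)
  have colsXQ: "columns X \<subseteq> conv_cols W"
  proof
    fix x assume "x \<in> columns X"
    then obtain j where xj: "x = column j X" unfolding columns_def by blast
    have "x = (\<Sum>i\<in>UNIV. H $ i $ j *\<^sub>R column i W)" using xj XWH column_mult_eq by simp
    moreover have "(\<Sum>i\<in>UNIV. H $ i $ j *\<^sub>R column i W) \<in> conv_cols W"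
      unfolding conv_cols_def
      by (rule convex_sum) (use stoch in \<open>auto simp: columns_def intro: hull_inc\<close>)
    ultimately show "x \<in> conv_cols W" by simp
  qed
  have PQ: "conv_cols X \<subseteq> conv_cols W"
    unfolding conv_cols_def[of X]
    by (rule hull_minimal[OF colsXQ]) (simp add: conv_cols_def)
  have polyP: "polytope (conv_cols X)" unfolding conv_cols_def
    by (rule polytope_convex_hull[OF finite_columns])
  have polyQ: "polytope (conv_cols W)" unfolding conv_cols_def
    by (rule polytope_convex_hull[OF finite_columns])
  show "F facet_of conv_cols X"
  proof (rule abstract_main[OF polyP polyQ PQ FQ])
    fix F' assume F'Q: "F' facet_of conv_cols W"
    obtain S where S: "S \<subseteq> F' \<inter> columns X" "card S \<ge> s"
      "aff_dim (convex hull S) = int (rank X) - 2"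
      using condc F'Q by blast
    have Sne: "S \<noteq> {}"
    proof
      assume "S = {}"
      then have "rank X = 1" using S(3) by simp
      then show False using S(2) srank \<open>S = {}\<close> by simp
    qed
    have finS: "finite (F'' \<inter> columns X)" for F'' using finite_columns by blast
    show "\<exists>S. S \<noteq> {} \<and> S \<subseteq> F' \<inter> conv_cols X \<and>
              (\<forall>C. C facet_of conv_cols X \<and> S \<subseteq> C \<longrightarrow> C facet_of conv_cols W)"
    proof (intro exI conjI allI impI)
      show "S \<noteq> {}" by (rule Sne)
      show "S \<subseteq> F' \<inter> conv_cols X" using S(1) colsXP by blast
      fix C assume C: "C facet_of conv_cols X \<and> S \<subseteq> C"
      show "C facet_of conv_cols W"
      proof (rule ccontr)
        assume "\<not> C facet_of conv_cols W"
        then have "card (C \<inter> columns X) < s" using condd C by blast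
        moreover have "card S \<le> card (C \<inter> columns X)"
          by (rule card_mono[OF finS]) (use C S(1) in blast)
        ultimately show False using S(2) by simp
      qed
    qed
  qed
qed

end
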